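(* Let $m=1$, $n,T\in\mathbb{N}$, $L\in[1,T]$ with $n+L\le T$, $u_{[0,T-1]}\in\mathbb{R}^T$, and let $\eta=\begin{bmatrix}\eta_0&\cdots&\eta_{n+L-1}\end{bmatrix}^\top\in\mathbb{R}^{n+L}\setminus\{0\}$ satisfy $\eta^\top\mathcal{H}_{n+L}(u_{[0,T-1]})=0$. Define $\Lambda(\eta)=\{\lambda\in\mathbb{C}:\sum_{i=0}^{n+L-1}\lambda^i\eta_i=0\}$. Then for every $A\in\mathbb{R}^{n\times n}$ with $\operatorname{spec}A\cap\Lambda(\eta)=\varnothing$ and every $B\in\mathbb{R}^{n}$, there exists a state sequence $x_{[0,T-L]}$ satisfying $x(t+1)=Ax(t)+Bu(t)$ for all $t\in[0,T-L-1]$ such that $$\operatorname{rank}\begin{bmatrix}\mathcal{H}_L(u_{[0,T-1]})\\ \mathcal{H}_1(x_{[0,T-L]})\end{bmatrix}<n+L.$$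
   Context: For $v:\mathbb{Z}_+\to\mathbb{R}^q$, $v_{[0,T-1]}=\begin{bmatrix}v(0)^\top & \cdots & v(T-1)^\top\end{bmatrix}^\top$. For $k\in[1,T]$ the Hankel matrix of depth $k$ is the $qk\times(T-k+1)$ block matrix $\mathcal{H}_k(v_{[0,T-1]})$ whose $(i,j)$ block ($i\in[0,k-1]$, $j\in[0,T-k]$) is $v(i+j)$; in particular $\mathcal{H}_1(x_{[0,T-L]})=\begin{bmatrix}x(0)&\cdots&x(T-L)\end{bmatrix}$. $\operatorname{spec}A$ denotes the set of (complex) eigenvalues of $A$. *)

theory Defs
  imports "Jordan_Normal_Form.DL_Rank" "Jordan_Normal_Form.Char_Poly"
begin

text \<open>Block Hankel matrix of depth k of a q-dimensional signal v on [0, Tlen-1]: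
  a (q*k) x (Tlen-k+1) matrix whose (i,j) block is v(i+j).\<close>
definition hankel :: "nat \<Rightarrow> nat \<Rightarrow> nat \<Rightarrow> (nat \<Rightarrow> 'a vec) \<Rightarrow> 'a mat" where
  "hankel q k Tlen v = mat (q * k) (Tlen - k + 1) (\<lambda>(r, c). v (r div q + c) $ (r mod q))"

definition hankel_scalar :: "nat \<Rightarrow> nat \<Rightarrow> (nat \<Rightarrow> 'a) \<Rightarrow> 'a mat" where
  "hankel_scalar k Tlen u = mat k (Tlen - k + 1) (\<lambda>(i, j). u (i + j))"

definition spec :: "real mat \<Rightarrow> complex set" where
  "spec A = {z. eigenvalue (map_mat complex_of_real A) z}"

definition Lambda :: "real vec \<Rightarrow> complex set" where
  "Lambda \<eta> = {z. (\<Sum>i<dim_vec \<eta>. z ^ i * complex_of_real (\<eta> $ i)) = 0}"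

end

theory Submission imports Defs begin

lemma (in vec_space) rank_le_card_span:
  assumes A: "A \<in> carrier_mat n nc" and W: "W \<subseteq> carrier_vec n" "finite W"
    and sub: "set (cols A) \<subseteq> span W"
  shows "rank A \<le> card W"
proof -
  obtain S where S: "maximal S (\<lambda>T. T \<subseteq> set (cols A) \<and> lin_indpt T)"
    using maximal_exists[of "(\<lambda>T. T \<subseteq> set (cols A) \<and> lin_indpt T)" "card (set (cols A))" "{}"]
    by (meson List.finite_set card_mono empty_iff empty_subsetI finite_lin_indpt2 rev_finite_subset)
  have r: "rank A = card S" by (rule rank_card_indpt[OF A S])
  from S have SA: "S \<subseteq> set (cols A)" and li: "lin_indpt S" unfolding maximal_def by auto
  have fS: "finite S" using SA finite_subset by blast
  have "S \<subseteq> span W" using SA sub by auto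
  from replacement[OF fS W(2) W(1) li this] have "card S \<le> card W" by force
  then show ?thesis using r by linarith
qed


definition meval :: "'a::comm_ring_1 mat \<Rightarrow> nat \<Rightarrow> 'a poly \<Rightarrow> 'a mat" where
  "meval A n p = foldr (\<lambda>c M. c \<cdot>\<^sub>m 1\<^sub>m n + A * M) (coeffs p) (0\<^sub>m n n)"

lemma meval_carrier_aux: "A \<in> carrier_mat n n \<Longrightarrow>
   foldr (\<lambda>c M. c \<cdot>\<^sub>m 1\<^sub>m n + A * M) cs (0\<^sub>m n n) \<in> carrier_mat n n"
  by (induct cs) auto

lemma meval_carrier[simp]: "A \<in> carrier_mat n n \<Longrightarrow> meval A n p \<in> carrier_mat n n"
  unfolding meval_def by (rule meval_carrier_aux)

lemma meval_dims[simp]: "A \<in> carrier_mat n n \<Longrightarrow> dim_row (meval A n p) = n"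
   "A \<in> carrier_mat n n \<Longrightarrow> dim_col (meval A n p) = n"
  using meval_carrier by (blast intro: carrier_matD)+

lemma meval_0[simp]: "meval A n 0 = 0\<^sub>m n n" unfolding meval_def by simp

lemma meval_pCons: assumes A: "A \<in> carrier_mat n n"
  shows "meval A n (pCons a p) = a \<cdot>\<^sub>m 1\<^sub>m n + A * meval A n p"
proof (cases "a = 0 \<and> p = 0")
  case True
  then show ?thesis using A by (auto simp: meval_def)
next
  case False
  then have "coeffs (pCons a p) = a # coeffs p" by (auto simp: cCons_def)
  then show ?thesis unfolding meval_def by simp
qed

lemma meval_add: assumes A: "A \<in> carrier_mat n n"
  shows "meval A n (p + q) = meval A n p + meval A n q"
proof (induct p q rule: poly_induct2)
  case 0 then show ?case using A by simp
next
  case (pCons a p b q)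
  have [simp]: "dim_row A = n" "dim_col A = n" using A by auto
  have c: "meval A n p \<in> carrier_mat n n" "meval A n q \<in> carrier_mat n n" using A by auto
  have d: "A * (meval A n p + meval A n q) = A * meval A n p + A * meval A n q"
    by (rule mult_add_distrib_mat[OF A c])
  show ?case unfolding add_pCons meval_pCons[OF A] pCons d
    by (rule eq_matI, insert A c, auto simp: algebra_simps carrier_matD)
qed

lemma meval_smult: assumes A: "A \<in> carrier_mat n n"
  shows "meval A n (smult c p) = c \<cdot>\<^sub>m meval A n p"
proof (induct p)
  case 0 then show ?case by simp
next
  case (pCons a p)
  have [simp]: "dim_row A = n" "dim_col A = n" using A by auto
  have c: "meval A n p \<in> carrier_mat n n" using A by auto
  show ?case unfolding smult_pCons meval_pCons[OF A] pCons.hyps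
    by (rule eq_matI, insert A c, auto simp: mult_smult_distrib[OF A c] algebra_simps carrier_matD)
qed

lemma meval_mult: assumes A: "A \<in> carrier_mat n n"
  shows "meval A n (p * q) = meval A n p * meval A n q"
proof (induct p)
  case 0 then show ?case using A by (simp add: left_mult_zero_mat[OF meval_carrier[OF A]])
next
  case (pCons a p)
  have c: "meval A n p \<in> carrier_mat n n" "meval A n q \<in> carrier_mat n n" using A by auto
  have "(a \<cdot>\<^sub>m 1\<^sub>m n + A * meval A n p) * meval A n q
     = (a \<cdot>\<^sub>m 1\<^sub>m n) * meval A n q + (A * meval A n p) * meval A n q"
    by (rule add_mult_distrib_mat, insert A c, auto)
  also have "\<dots> = a \<cdot>\<^sub>m meval A n q + A * (meval A n p * meval A n q)"
    using A c by (simp add: mult_smult_assoc_mat[OF one_carrier_mat c(2)] assoc_mult_mat[OF A c(1) c(2)])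
  finally have e: "(a \<cdot>\<^sub>m 1\<^sub>m n + A * meval A n p) * meval A n q = a \<cdot>\<^sub>m meval A n q + A * (meval A n p * meval A n q)" .
  have f: "0 \<cdot>\<^sub>m 1\<^sub>m n + A * (meval A n p * meval A n q) = A * (meval A n p * meval A n q)"
    by (rule eq_matI, insert A c, auto)
  show ?case unfolding mult_pCons_left meval_add[OF A] meval_smult[OF A] meval_pCons[OF A] pCons.hyps e f ..
qed


lemma pow_mat_Suc_left: assumes A: "A \<in> carrier_mat n n"
  shows "A ^\<^sub>m (Suc i) = A * A ^\<^sub>m i"
proof (induct i)
  case 0 then show ?case using A by simp
next
  case (Suc i)
  have "A ^\<^sub>m Suc (Suc i) = (A * A ^\<^sub>m i) * A" using Suc by simp
  also have "\<dots> = A * (A ^\<^sub>m i * A)" using A by (simp add: assoc_mult_mat[OF A _ A])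
  finally show ?case by simp
qed

lemma one_smult_one_mat[simp]: "(1::'a::semiring_1) \<cdot>\<^sub>m 1\<^sub>m n = 1\<^sub>m n"
  by (rule eq_matI) auto

lemma smult_one_mat_vec: assumes w: "(w :: 'a :: comm_ring_1 vec) \<in> carrier_vec n"
  shows "(a \<cdot>\<^sub>m 1\<^sub>m n) *\<^sub>v w = a \<cdot>\<^sub>v w"
proof (rule eq_vecI)
  fix i assume "i < dim_vec (a \<cdot>\<^sub>v w)"
  then have i: "i < n" using w by auto
  have "((a \<cdot>\<^sub>m 1\<^sub>m n) *\<^sub>v w) $ i = (\<Sum>j = 0..<n. (if i = j then a else 0) * w $ j)"
    using w i by (auto simp: scalar_prod_def intro!: sum.cong)
  also have "\<dots> = a * w $ i" proof -
    have "(\<Sum>j = 0..<n. (if i = j then a else 0) * w $ j) = (\<Sum>j = 0..<n. if i = j then a * w $ j else 0)"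
      by (rule sum.cong) auto
    then show ?thesis using i by simp
  qed
  finally show "((a \<cdot>\<^sub>m 1\<^sub>m n) *\<^sub>v w) $ i = (a \<cdot>\<^sub>v w) $ i" using i w by simp
qed (insert w, auto)

lemma meval_linear: assumes A: "A \<in> carrier_mat n n"
  shows "meval A n [:-\<mu>, 1:] = A - \<mu> \<cdot>\<^sub>m 1\<^sub>m n"
proof -
  have [simp]: "dim_row A = n" "dim_col A = n" using A by auto
  have "meval A n [:1:] = 1\<^sub>m n" using meval_pCons[OF A, of 1 0] A by (simp add: right_mult_zero_mat[OF A])
  then have "meval A n [:-\<mu>, 1:] = (-\<mu>) \<cdot>\<^sub>m 1\<^sub>m n + A * 1\<^sub>m n" using meval_pCons[OF A, of "-\<mu>" "[:1:]"] by simp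
  also have "\<dots> = A - \<mu> \<cdot>\<^sub>m 1\<^sub>m n" using A by (intro eq_matI) auto
  finally show ?thesis .
qed

lemma meval_one: assumes A: "A \<in> carrier_mat n n" shows "meval A n 1 = 1\<^sub>m n"
  using meval_pCons[OF A, of 1 0] A by (simp add: right_mult_zero_mat[OF A] one_pCons)

lemma prod_factors_eigen:
  fixes A :: "'a::field mat"
  assumes A: "A \<in> carrier_mat n n"
  shows "v \<in> carrier_vec n \<Longrightarrow> v \<noteq> 0\<^sub>v n \<Longrightarrow> meval A n (\<Prod>a\<leftarrow>as. [:-a, 1:]) *\<^sub>v v = 0\<^sub>v n
    \<Longrightarrow> \<exists>\<mu>\<in>set as. eigenvalue A \<mu>"
proof (induct as arbitrary: v)
  case Nil
  then show ?case using A by (simp add: meval_one[OF A])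
next
  case (Cons a as)
  let ?M = "meval A n (\<Prod>a\<leftarrow>as. [:-a, 1:])"
  have M: "?M \<in> carrier_mat n n" using A by simp
  have L: "A - a \<cdot>\<^sub>m 1\<^sub>m n \<in> carrier_mat n n" using A by (intro minus_carrier_mat) auto
  have "meval A n (\<Prod>a\<leftarrow>a#as. [:-a, 1:]) = (A - a \<cdot>\<^sub>m 1\<^sub>m n) * ?M"
  proof -
    have "(\<Prod>a\<leftarrow>a#as. [:-a, 1:]) = [:-a, 1:] * (\<Prod>a\<leftarrow>as. [:-a, 1:])" by simp
    then show ?thesis by (simp only: meval_mult[OF A] meval_linear[OF A])
  qed
  then have eq: "(A - a \<cdot>\<^sub>m 1\<^sub>m n) *\<^sub>v (?M *\<^sub>v v) = 0\<^sub>v n"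
    using Cons.prems assoc_mult_mat_vec[OF L M, of v] by simp
  show ?case
  proof (cases "?M *\<^sub>v v = 0\<^sub>v n")
    case True
    then show ?thesis using Cons by auto
  next
    case False
    let ?w = "?M *\<^sub>v v"
    have w: "?w \<in> carrier_vec n" using M by (intro mult_mat_vec_carrier[OF M Cons.prems(1)])
    have "A *\<^sub>v ?w = a \<cdot>\<^sub>v ?w"
    proof -
      have "(A - a \<cdot>\<^sub>m 1\<^sub>m n) *\<^sub>v ?w = A *\<^sub>v ?w - (a \<cdot>\<^sub>m 1\<^sub>m n) *\<^sub>v ?w"
        using A w by (simp add: minus_mult_distrib_mat_vec)
      also have "(a \<cdot>\<^sub>m 1\<^sub>m n) *\<^sub>v ?w = a \<cdot>\<^sub>v ?w" using w by (rule smult_one_mat_vec)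
      finally have "A *\<^sub>v ?w - a \<cdot>\<^sub>v ?w = 0\<^sub>v n" using eq by simp
      then show ?thesis using A w by (intro eq_vecI) (auto simp: vec_eq_iff)
    qed
    then have "eigenvalue A a" unfolding eigenvalue_def eigenvector_def
      using A w False by (intro exI[of _ ?w]) auto
    then show ?thesis by simp
  qed
qed


lemma meval_index_aux: assumes A: "A \<in> carrier_mat n n" and l: "l < n"
  shows "(\<forall>i\<ge>m. coeff p i = 0) \<Longrightarrow> \<forall>k<n. meval A n p $$ (k,l) = (\<Sum>i<m. coeff p i * (A ^\<^sub>m i) $$ (k,l))"
proof (induct p arbitrary: m)
  case 0 then show ?case using l by simp
next
  case (pCons a p m)
  have [simp]: "dim_row A = n" "dim_col A = n" using A by auto
  obtain m' where m: "m = Suc m'"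
  proof (cases m)
    case 0
    then have "pCons a p = 0" using pCons.prems by (intro poly_eqI) auto
    then show ?thesis using pCons.hyps by simp
  next
    case (Suc m') then show ?thesis using that by simp
  qed
  have cp: "\<forall>i\<ge>m'. coeff p i = 0" using pCons.prems m
    by (metis Suc_le_mono coeff_pCons_Suc)
  have IH: "\<And>j. j < n \<Longrightarrow> meval A n p $$ (j,l) = (\<Sum>i<m'. coeff p i * (A ^\<^sub>m i) $$ (j,l))"
    using pCons.hyps(2)[OF cp] by blast
  have Mc: "meval A n p \<in> carrier_mat n n" using A by simp
  show ?case
  proof (intro allI impI)
    fix k assume k: "k < n"
    have "meval A n (pCons a p) $$ (k,l) = (a \<cdot>\<^sub>m 1\<^sub>m n) $$ (k,l) + (A * meval A n p) $$ (k,l)"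
      unfolding meval_pCons[OF A] using k l Mc by simp
    also have "(A * meval A n p) $$ (k,l) = (\<Sum>j<n. A $$ (k,j) * meval A n p $$ (j,l))"
      using k l Mc by (simp add: scalar_prod_def atLeast0LessThan)
    also have "\<dots> = (\<Sum>j<n. A $$ (k,j) * (\<Sum>i<m'. coeff p i * (A ^\<^sub>m i) $$ (j,l)))"
      by (rule sum.cong) (auto simp: IH)
    also have "\<dots> = (\<Sum>i<m'. coeff p i * (\<Sum>j<n. A $$ (k,j) * (A ^\<^sub>m i) $$ (j,l)))"
      by (simp add: sum_distrib_left sum_distrib_right sum.swap[of _ "{..<n}"] algebra_simps)
    also have "\<dots> = (\<Sum>i<m'. coeff p i * (A ^\<^sub>m (Suc i)) $$ (k,l))"
    proof (rule sum.cong[OF refl])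
      fix i
      have "(A ^\<^sub>m (Suc i)) $$ (k,l) = (A * A ^\<^sub>m i) $$ (k,l)" by (simp only: pow_mat_Suc_left[OF A])
      also have "\<dots> = (\<Sum>j<n. A $$ (k,j) * (A ^\<^sub>m i) $$ (j,l))"
        using k l A by (simp add: scalar_prod_def atLeast0LessThan)
      finally show "coeff p i * (\<Sum>j<n. A $$ (k,j) * (A ^\<^sub>m i) $$ (j,l)) = coeff p i * (A ^\<^sub>m (Suc i)) $$ (k,l)" by simp
    qed
    finally have "meval A n (pCons a p) $$ (k,l) = (a \<cdot>\<^sub>m 1\<^sub>m n) $$ (k,l) + (\<Sum>i<m'. coeff p i * (A ^\<^sub>m (Suc i)) $$ (k,l))" .
    moreover have "(\<Sum>i<m. coeff (pCons a p) i * (A ^\<^sub>m i) $$ (k,l))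
       = a * (A ^\<^sub>m 0) $$ (k,l) + (\<Sum>i<m'. coeff p i * (A ^\<^sub>m (Suc i)) $$ (k,l))"
      by (simp only: m sum.lessThan_Suc_shift coeff_pCons_0 coeff_pCons_Suc)
    moreover have "(a \<cdot>\<^sub>m 1\<^sub>m n) $$ (k,l) = a * (A ^\<^sub>m 0) $$ (k,l)" using k l by simp
    ultimately show "meval A n (pCons a p) $$ (k,l) = (\<Sum>i<m. coeff (pCons a p) i * (A ^\<^sub>m i) $$ (k,l))" by simp
  qed
qed

lemma smult_mat_mult_vec': assumes "Q \<in> carrier_mat n nc" "v \<in> carrier_vec nc"
  shows "(c \<cdot>\<^sub>m Q) *\<^sub>v v = (c :: 'a :: comm_ring_1) \<cdot>\<^sub>v (Q *\<^sub>v v)"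
  using assms by (intro eq_vecI) (auto simp: scalar_prod_def sum_distrib_left mult.assoc)

lemma det_poly_nonzero:
  fixes A :: "real mat" and e :: "nat \<Rightarrow> real"
  assumes A: "A \<in> carrier_mat n n" and nz: "\<exists>i<N. e i \<noteq> 0"
    and sp: "\<And>\<mu>. eigenvalue (map_mat complex_of_real A) \<mu> \<Longrightarrow> (\<Sum>i<N. \<mu> ^ i * complex_of_real (e i)) \<noteq> 0"
  shows "det (mat n n (\<lambda>(k,l). \<Sum>i<N. e i * (A ^\<^sub>m i) $$ (k,l))) \<noteq> 0"
proof
  define P where "P = mat n n (\<lambda>(k,l). \<Sum>i<N. e i * (A ^\<^sub>m i) $$ (k,l))"
  assume "det (mat n n (\<lambda>(k,l). \<Sum>i<N. e i * (A ^\<^sub>m i) $$ (k,l))) = 0"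
  then have dP: "det P = 0" unfolding P_def .
  define Ac where "Ac = map_mat complex_of_real A"
  have Ac: "Ac \<in> carrier_mat n n" using A unfolding Ac_def by simp
  define pc where "pc = (\<Sum>i<N. monom (complex_of_real (e i)) i)"
  have cpc: "coeff pc i = (if i < N then complex_of_real (e i) else 0)" for i
    unfolding pc_def by (simp add: coeff_sum coeff_monom)
  have ppc: "poly pc z = (\<Sum>i<N. z ^ i * complex_of_real (e i))" for z
    unfolding pc_def by (simp add: poly_sum poly_monom mult.commute)
  have pc0: "pc \<noteq> 0" using nz cpc by (metis coeff_0 of_real_eq_0_iff)
  have PM: "map_mat complex_of_real P = meval Ac n pc"
  proof (rule eq_matI)
    fix k l assume k: "k < dim_row (meval Ac n pc)" and l: "l < dim_col (meval Ac n pc)"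
    then have k: "k < n" and l: "l < n" using Ac by auto
    have "meval Ac n pc $$ (k,l) = (\<Sum>i<N. coeff pc i * (Ac ^\<^sub>m i) $$ (k,l))"
      using meval_index_aux[OF Ac l, of N pc] cpc k by auto
    also have "\<dots> = (\<Sum>i<N. complex_of_real (e i * (A ^\<^sub>m i) $$ (k,l)))"
    proof (rule sum.cong[OF refl])
      fix i assume "i \<in> {..<N}"
      have "Ac ^\<^sub>m i = map_mat complex_of_real (A ^\<^sub>m i)"
        unfolding Ac_def by (rule of_real_hom.mat_hom_pow[OF A, symmetric])
      then show "coeff pc i * (Ac ^\<^sub>m i) $$ (k,l) = complex_of_real (e i * (A ^\<^sub>m i) $$ (k,l))"
        using \<open>i \<in> {..<N}\<close> cpc k l A by simp
    qed
    finally show "map_mat complex_of_real P $$ (k,l) = meval Ac n pc $$ (k,l)"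
      using k l unfolding P_def by simp
  qed (insert Ac, auto simp: P_def)
  have "det (map_mat complex_of_real P) = 0" using dP by simp
  then obtain v where v: "v \<in> carrier_vec n" "v \<noteq> 0\<^sub>v n" "meval Ac n pc *\<^sub>v v = 0\<^sub>v n"
    using det_0_iff_vec_prod_zero[of "meval Ac n pc" n] Ac PM by auto
  obtain as where fac: "smult (coeff pc (degree pc)) (\<Prod>a\<leftarrow>as. [:- a, 1:]) = pc"
    using fundamental_theorem_algebra_factorized[of pc] by blast
  define c where "c = coeff pc (degree pc)"
  have c0: "c \<noteq> 0" using pc0 unfolding c_def by simp
  define Q where "Q = meval Ac n (\<Prod>a\<leftarrow>as. [:- a, 1:])"
  have Q: "Q \<in> carrier_mat n n" using Ac unfolding Q_def by simp
  have "meval Ac n pc = c \<cdot>\<^sub>m Q" using fac meval_smult[OF Ac] unfolding c_def Q_def by metis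
  then have "c \<cdot>\<^sub>v (Q *\<^sub>v v) = 0\<^sub>v n" using v Q by (metis smult_mat_mult_vec')
  then have "Q *\<^sub>v v = 0\<^sub>v n" using c0 Q v
    by (intro eq_vecI) (auto simp: vec_eq_iff)
  then obtain \<mu> where mu: "\<mu> \<in> set as" "eigenvalue Ac \<mu>"
    using prod_factors_eigen[OF Ac v(1) v(2)] unfolding Q_def by blast
  have "poly (\<Prod>a\<leftarrow>as. [:- a, 1:]) \<mu> = 0" using mu(1) by (induct as) auto
  then have "poly pc \<mu> = 0" using fac[symmetric] by (metis mult_zero_right poly_smult)
  then show False using sp[of \<mu>] mu(2) ppc unfolding Ac_def by simp
qed


fun sysx :: "real mat \<Rightarrow> real vec \<Rightarrow> (nat \<Rightarrow> real) \<Rightarrow> real vec \<Rightarrow> nat \<Rightarrow> real vec" where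
  "sysx A B w x0 0 = x0"
| "sysx A B w x0 (Suc t) = A *\<^sub>v sysx A B w x0 t + w t \<cdot>\<^sub>v B"

function uext :: "(nat \<Rightarrow> real) \<Rightarrow> nat \<Rightarrow> nat \<Rightarrow> (nat \<Rightarrow> real) \<Rightarrow> nat \<Rightarrow> real" where
  "uext e d K u t = (if t \<le> K \<or> t < d then u t
     else - (\<Sum>i<d. e i * uext e d K u (t - d + i)) / e d)"
  by auto
termination by (relation "measure (\<lambda>(e,d,K,u,t). t)") auto

declare uext.simps[simp del]

lemma uext_eq: "t \<le> K \<or> t < d \<Longrightarrow> uext e d K u t = u t"
  by (subst uext.simps) simp

lemma uext_rec: assumes "\<not> (t \<le> K \<or> t < d)" "e d \<noteq> 0"
  shows "(\<Sum>i<Suc d. e i * uext e d K u (t - d + i)) = 0"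
proof -
  have "uext e d K u t = - (\<Sum>i<d. e i * uext e d K u (t - d + i)) / e d"
    using assms(1) by (subst uext.simps) simp
  then have "e d * uext e d K u t = - (\<Sum>i<d. e i * uext e d K u (t - d + i))"
    using assms(2) by (simp add: field_simps)
  moreover have "t - d + d = t" using assms(1) by simp
  ultimately show ?thesis by simp
qed

lemma sysx_carrier: "A \<in> carrier_mat n n \<Longrightarrow> B \<in> carrier_vec n \<Longrightarrow> x0 \<in> carrier_vec n \<Longrightarrow>
  sysx A B w x0 t \<in> carrier_vec n"
  by (induct t) auto

lemma sysx_index: assumes "A \<in> carrier_mat n n" "B \<in> carrier_vec n" "x0 \<in> carrier_vec n" "k < n"
  shows "sysx A B w x0 (Suc t) $ k = (\<Sum>l<n. A $$ (k,l) * sysx A B w x0 t $ l) + w t * B $ k"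
  using assms sysx_carrier[OF assms(1-3), of w t]
  by (simp add: scalar_prod_def atLeast0LessThan mult.commute)

lemma sysx_add: assumes A: "A \<in> carrier_mat n n" and B: "B \<in> carrier_vec n"
  and x1: "x1 \<in> carrier_vec n" and x2: "x2 \<in> carrier_vec n"
  shows "sysx A B (\<lambda>t. w1 t + w2 t) (x1 + x2) t = sysx A B w1 x1 t + sysx A B w2 x2 t"
proof (induct t)
  case 0 then show ?case by simp
next
  case (Suc t)
  have c1: "sysx A B w1 x1 t \<in> carrier_vec n" using sysx_carrier[OF A B x1] .
  have c2: "sysx A B w2 x2 t \<in> carrier_vec n" using sysx_carrier[OF A B x2] .
  show ?case unfolding sysx.simps Suc
    using A B c1 c2 by (intro eq_vecI) (auto simp: mult_add_distrib_mat_vec[OF A c1 c2] algebra_simps)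
qed

lemma sysx_free: assumes A: "A \<in> carrier_mat n n" and B: "B \<in> carrier_vec n"
  and x0: "x0 \<in> carrier_vec n"
  shows "sysx A B (\<lambda>_. 0) x0 t = (A ^\<^sub>m t) *\<^sub>v x0"
proof (induct t)
  case 0 then show ?case using x0 A by simp
next
  case (Suc t)
  have "(A ^\<^sub>m Suc t) *\<^sub>v x0 = (A * A ^\<^sub>m t) *\<^sub>v x0" by (simp only: pow_mat_Suc_left[OF A])
  also have "\<dots> = A *\<^sub>v ((A ^\<^sub>m t) *\<^sub>v x0)" using A x0 by (simp add: assoc_mult_mat_vec[of _ n n _ n])
  finally show ?case using Suc A B x0 by (intro eq_vecI) auto
qed


definition zc :: "nat \<Rightarrow> nat \<Rightarrow> (nat \<Rightarrow> real) \<Rightarrow> (nat \<Rightarrow> real vec) \<Rightarrow> nat \<Rightarrow> real vec" where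
  "zc L n w y t = vec (L+n) (\<lambda>r. if r < L then w (r+t) else y t $ (r - L))"

lemma append_rows_index: assumes "A \<in> carrier_mat nr1 nc" "B \<in> carrier_mat nr2 nc" "r < nr1 + nr2" "c < nc"
  shows "(A @\<^sub>r B) $$ (r,c) = (if r < nr1 then A $$ (r,c) else B $$ (r - nr1, c))"
  using assms unfolding append_rows_def by auto

lemma core:
  fixes A :: "real mat" and B :: "real vec" and u e :: "nat \<Rightarrow> real"
  assumes A: "A \<in> carrier_mat n n" and B: "B \<in> carrier_vec n"
    and TN: "n + L \<le> T" and dN: "d < n + L" and ed: "e d \<noteq> 0"
    and ez: "\<And>i. d < i \<Longrightarrow> i < n + L \<Longrightarrow> e i = 0"
    and hyp: "\<And>t. t \<le> T - (n+L) \<Longrightarrow> (\<Sum>i<n+L. e i * u (t+i)) = 0"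
    and detP: "det (mat n n (\<lambda>(k,l). \<Sum>i<n+L. e i * (A ^\<^sub>m i) $$ (k,l))) \<noteq> 0"
  shows "\<exists>x. (\<forall>t \<le> T - L. x t \<in> carrier_vec n) \<and> (\<forall>t < T - L. x (t + 1) = A *\<^sub>v x t + u t \<cdot>\<^sub>v B) \<and>
       vec_space.rank (L + n) (hankel_scalar L T u @\<^sub>r hankel n 1 (T - L + 1) x) < n + L"
proof -
  define N where "N = n + L"
  define K where "K = T - N + d"
  define uh where "uh = uext e d K u"
  have sumN: "(\<Sum>i<N. e i * f i) = (\<Sum>i<Suc d. e i * f i)" for f :: "nat \<Rightarrow> real"
    by (rule sum.mono_neutral_right) (insert dN ez, auto simp: N_def)
  have Rh: "(\<Sum>i<N. e i * uh (s+i)) = 0" for s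
  proof (cases "s + d \<le> K")
    case True
    have "(\<Sum>i<N. e i * uh (s+i)) = (\<Sum>i<Suc d. e i * uh (s+i))" by (rule sumN)
    also have "\<dots> = (\<Sum>i<Suc d. e i * u (s+i))"
      by (rule sum.cong) (insert True, auto simp: uh_def uext_eq)
    also have "\<dots> = (\<Sum>i<N. e i * u (s+i))" by (rule sumN[symmetric])
    also have "\<dots> = 0" using hyp[of s] True unfolding K_def N_def by simp
    finally show ?thesis .
  next
    case False
    have "(\<Sum>i<Suc d. e i * uh (s + d - d + i)) = 0"
      unfolding uh_def by (rule uext_rec) (insert False ed, auto)
    then show ?thesis using sumN by simp
  qed
  define dl where "dl = (\<lambda>t. u t - uh t)"
  have dl0: "dl t = 0" if "t \<le> K" for t using that by (simp add: dl_def uh_def uext_eq)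
  define zh where "zh = sysx A B uh (0\<^sub>v n)"
  define c where "c = vec n (\<lambda>k. - (\<Sum>i<N. e i * zh i $ k))"
  define P where "P = mat n n (\<lambda>(k,l). \<Sum>i<N. e i * (A ^\<^sub>m i) $$ (k,l))"
  have Pc: "P \<in> carrier_mat n n" unfolding P_def by simp
  obtain Q where Q: "Q \<in> carrier_mat n n" "P * Q = 1\<^sub>m n"
    using det_non_zero_imp_unit[OF Pc, of "()"] detP unfolding P_def N_def
    by (auto simp: Units_def ring_mat_def)
  define x0 where "x0 = Q *\<^sub>v c"
  have x0c: "x0 \<in> carrier_vec n" unfolding x0_def using Q by (simp add: c_def)
  have cc: "c \<in> carrier_vec n" by (simp add: c_def)
  have "P *\<^sub>v (Q *\<^sub>v c) = (P * Q) *\<^sub>v c"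
    by (rule assoc_mult_mat_vec[symmetric, OF Pc Q(1) cc])
  then have Px0: "P *\<^sub>v x0 = c" unfolding x0_def using Q cc by simp
  define xh where "xh = sysx A B uh x0"
  have xhc: "xh t \<in> carrier_vec n" for t unfolding xh_def by (rule sysx_carrier[OF A B x0c])
  have xh_split: "xh t = (A ^\<^sub>m t) *\<^sub>v x0 + zh t" for t
  proof -
    have "sysx A B (\<lambda>t. 0 + uh t) (x0 + 0\<^sub>v n) t = sysx A B (\<lambda>_. 0) x0 t + sysx A B uh (0\<^sub>v n) t"
      by (rule sysx_add[OF A B x0c], simp)
    then show ?thesis using x0c unfolding xh_def zh_def sysx_free[OF A B x0c] by simp
  qed
  have zhc: "zh t \<in> carrier_vec n" for t unfolding zh_def by (rule sysx_carrier[OF A B], simp)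
  have q0: "(\<Sum>i<N. e i * xh i $ k) = 0" if k: "k < n" for k
  proof -
    have pw: "((A ^\<^sub>m i) *\<^sub>v x0) $ k = (\<Sum>l<n. (A ^\<^sub>m i) $$ (k,l) * x0 $ l)" for i
      using k A x0c by (simp add: scalar_prod_def atLeast0LessThan)
    have e1: "xh i $ k = ((A ^\<^sub>m i) *\<^sub>v x0) $ k + zh i $ k" for i
      using xh_split[of i] zhc[of i] k by simp
    have "(P *\<^sub>v x0) $ k = (\<Sum>l<n. P $$ (k,l) * x0 $ l)"
      using k Pc x0c by (simp add: scalar_prod_def atLeast0LessThan)
    also have "\<dots> = (\<Sum>l<n. (\<Sum>i<N. e i * (A ^\<^sub>m i) $$ (k,l)) * x0 $ l)"
      using k by (intro sum.cong) (auto simp: P_def)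
    also have "\<dots> = (\<Sum>i<N. e i * (\<Sum>l<n. (A ^\<^sub>m i) $$ (k,l) * x0 $ l))"
      by (simp add: sum_distrib_left sum_distrib_right sum.swap[of _ "{..<N}"] mult.assoc)
    finally have e2: "(\<Sum>i<N. e i * ((A ^\<^sub>m i) *\<^sub>v x0) $ k) = (P *\<^sub>v x0) $ k"
      by (simp add: pw)
    have "(\<Sum>i<N. e i * xh i $ k) = (\<Sum>i<N. e i * ((A ^\<^sub>m i) *\<^sub>v x0) $ k) + (\<Sum>i<N. e i * zh i $ k)"
      by (simp add: e1 sum.distrib algebra_simps)
    also have "\<dots> = 0" unfolding e2 Px0 using k by (simp add: c_def)
    finally show ?thesis .
  qed
  have q: "\<forall>k<n. (\<Sum>i<N. e i * xh (t+i) $ k) = 0" for t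
  proof (induct t)
    case 0 then show ?case using q0 by simp
  next
    case (Suc t)
    show ?case
    proof (intro allI impI)
      fix k assume k: "k < n"
      have "(\<Sum>i<N. e i * xh (Suc t + i) $ k)
          = (\<Sum>i<N. e i * ((\<Sum>l<n. A $$ (k,l) * xh (t+i) $ l) + uh (t+i) * B $ k))"
        using sysx_index[OF A B x0c k] unfolding xh_def by simp
      also have "\<dots> = (\<Sum>l<n. A $$ (k,l) * (\<Sum>i<N. e i * xh (t+i) $ l)) + B $ k * (\<Sum>i<N. e i * uh (t+i))"
        by (simp add: sum.distrib sum_distrib_left sum_distrib_right sum.swap[of _ "{..<N}"] algebra_simps)
      also have "\<dots> = 0" using Suc Rh by simp
      finally show "(\<Sum>i<N. e i * xh (Suc t + i) $ k) = 0" .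
    qed
  qed
  define x where "x = sysx A B u x0"
  define xd where "xd = sysx A B dl (0\<^sub>v n)"
  have xc: "x t \<in> carrier_vec n" for t unfolding x_def by (rule sysx_carrier[OF A B x0c])
  have xdc: "xd t \<in> carrier_vec n" for t unfolding xd_def by (rule sysx_carrier[OF A B], simp)
  have xsplit: "x t = xh t + xd t" for t
  proof -
    have "sysx A B (\<lambda>t. uh t + dl t) (x0 + 0\<^sub>v n) t = sysx A B uh x0 t + sysx A B dl (0\<^sub>v n) t"
      by (rule sysx_add[OF A B x0c], simp)
    moreover have "(\<lambda>t. uh t + dl t) = u" by (auto simp: dl_def)
    ultimately show ?thesis using x0c unfolding x_def xh_def xd_def by simp
  qed
  have xd0: "t \<le> K + 1 \<Longrightarrow> xd t = 0\<^sub>v n" for t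
  proof (induct t)
    case 0 then show ?case by (simp add: xd_def)
  next
    case (Suc t)
    then have "xd t = 0\<^sub>v n" "dl t = 0" using dl0 by auto
    then show ?case using A B unfolding xd_def by auto
  qed
  define C where "C = T - L + 1"
  define M where "M = hankel_scalar L T u @\<^sub>r hankel n 1 (T - L + 1) x"
  have H1: "hankel_scalar L T u \<in> carrier_mat L C" by (simp add: hankel_scalar_def C_def)
  have H2: "hankel n 1 (T - L + 1) x \<in> carrier_mat n C" by (simp add: hankel_def C_def)
  have Mc: "M \<in> carrier_mat (L + n) C" unfolding M_def using H1 H2 by auto
  have colM: "col M t = zc L n u x t" if t: "t < C" for t
  proof (rule eq_vecI)
    show "dim_vec (col M t) = dim_vec (zc L n u x t)" using Mc by (simp add: zc_def)
    fix r assume "r < dim_vec (zc L n u x t)"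
    then have r: "r < L + n" by (simp add: zc_def)
    have "col M t $ r = M $$ (r,t)" using Mc r t by simp
    also have "\<dots> = (if r < L then hankel_scalar L T u $$ (r,t) else hankel n 1 (T - L + 1) x $$ (r - L, t))"
      unfolding M_def by (rule append_rows_index[OF H1 H2 r t])
    also have "\<dots> = zc L n u x t $ r"
      using r t by (auto simp: hankel_scalar_def hankel_def zc_def C_def)
    finally show "col M t $ r = zc L n u x t $ r" .
  qed
  have zsplit: "zc L n u x t = zc L n uh xh t + zc L n dl xd t" for t
    using xhc[of t] xdc[of t] unfolding zc_def
    by (intro eq_vecI) (auto simp: dl_def xsplit)
  interpret V: vec_space "TYPE(real)" "L + n" .
  have span0: "0\<^sub>v (L+n) \<in> V.span S" for S
    by (rule V.in_spanI[of _ "\<lambda>_. 0" "{}"]) auto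
  define S1 where "S1 = zc L n uh xh ` {..<d}"
  define S2 where "S2 = zc L n dl xd ` {K + 2 - L..<C}"
  have S1c: "S1 \<subseteq> carrier_vec (L+n)" unfolding S1_def zc_def by auto
  have S2c: "S2 \<subseteq> carrier_vec (L+n)" unfolding S2_def zc_def by auto
  have zcc: "zc L n w y t \<in> carrier_vec (L+n)" for w y t unfolding zc_def by auto
  have rowrel: "(\<Sum>i<Suc d. e i * zc L n uh xh (s + i) $ r) = 0" if r: "r < L + n" for s r
  proof (cases "r < L")
    case True
    have "(\<Sum>i<Suc d. e i * zc L n uh xh (s + i) $ r) = (\<Sum>i<Suc d. e i * uh ((r + s) + i))"
      using True r by (intro sum.cong) (auto simp: zc_def add.assoc)
    also have "\<dots> = (\<Sum>i<N. e i * uh ((r + s) + i))" by (rule sumN[symmetric])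
    finally show ?thesis using Rh by simp
  next
    case False
    have "(\<Sum>i<Suc d. e i * zc L n uh xh (s + i) $ r) = (\<Sum>i<Suc d. e i * xh (s + i) $ (r - L))"
      using False r by (intro sum.cong) (auto simp: zc_def)
    also have "\<dots> = (\<Sum>i<N. e i * xh (s + i) $ (r - L))" by (rule sumN[symmetric])
    finally show ?thesis using q[of s] False r by simp
  qed
  have spanA: "zc L n uh xh t \<in> V.span S1" for t
  proof (induct t rule: less_induct)
    case (less t)
    show ?case
    proof (cases "t < d")
      case True
      then have "zc L n uh xh t \<in> S1" unfolding S1_def by auto
      then show ?thesis using V.span_mem[OF S1c] by auto
    next
      case False
      define lc where "lc m = vec (L+n) (\<lambda>r. \<Sum>i<m. e i * zc L n uh xh (t - d + i) $ r)" for m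
      have lcs: "m \<le> d \<Longrightarrow> lc m \<in> V.span S1" for m
      proof (induct m)
        case 0
        have "lc 0 = 0\<^sub>v (L+n)" unfolding lc_def by auto
        then show ?case using span0[of S1] by simp
      next
        case (Suc m)
        have "lc (Suc m) = lc m + e m \<cdot>\<^sub>v zc L n uh xh (t - d + m)"
          unfolding lc_def by (intro eq_vecI) (auto simp: zc_def)
        moreover have "zc L n uh xh (t - d + m) \<in> V.span S1" using less False Suc(2) by auto
        then have "e m \<cdot>\<^sub>v zc L n uh xh (t - d + m) \<in> V.span S1"
          by (rule V.smult_in_span[OF S1c])
        ultimately show ?case using V.span_add1[OF S1c] Suc by auto
      qed
      have "zc L n uh xh t = (- 1 / e d) \<cdot>\<^sub>v lc d"
      proof (rule eq_vecI)
        fix r assume "r < dim_vec ((- 1 / e d) \<cdot>\<^sub>v lc d)"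
        then have r: "r < L + n" by (simp add: lc_def)
        have tt: "t - d + d = t" using False by simp
        have "(\<Sum>i<Suc d. e i * zc L n uh xh (t - d + i) $ r) = 0" by (rule rowrel[OF r])
        then have "lc d $ r + e d * zc L n uh xh t $ r = 0" using r tt by (simp add: lc_def)
        then show "zc L n uh xh t $ r = ((- 1 / e d) \<cdot>\<^sub>v lc d) $ r" using r ed
          by (simp add: lc_def field_simps)
      qed (simp add: lc_def zc_def)
      then show ?thesis using V.smult_in_span[OF S1c lcs[of d]] by simp
    qed
  qed
  have spanB: "zc L n dl xd t \<in> V.span S2" if t: "t < C" for t
  proof (cases "K + 2 - L \<le> t")
    case True
    then have "zc L n dl xd t \<in> S2" using t unfolding S2_def by auto
    then show ?thesis using V.span_mem[OF S2c] by auto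
  next
    case False
    then have tK: "t + L \<le> K + 1" by linarith
    have "zc L n dl xd t = 0\<^sub>v (L+n)"
      using tK xd0[of t] by (intro eq_vecI) (auto simp: zc_def dl0)
    then show ?thesis using span0[of S2] by simp
  qed
  have Wc: "S1 \<union> S2 \<subseteq> carrier_vec (L+n)" using S1c S2c by auto
  have cols: "set (cols M) \<subseteq> V.span (S1 \<union> S2)"
  proof
    fix v assume "v \<in> set (cols M)"
    then obtain t where t: "t < C" and v: "v = col M t" using Mc
      by (metis cols_length cols_nth in_set_conv_nth carrier_matD(2))
    have a: "zc L n uh xh t \<in> V.span (S1 \<union> S2)"
      using spanA[of t] V.span_is_monotone[of S1 "S1 \<union> S2"] by auto
    have b: "zc L n dl xd t \<in> V.span (S1 \<union> S2)"
      using spanB[OF t] V.span_is_monotone[of S2 "S1 \<union> S2"] by auto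
    show "v \<in> V.span (S1 \<union> S2)" unfolding v colM[OF t] zsplit
      by (rule V.span_add1[OF Wc a b])
  qed
  have fin: "finite (S1 \<union> S2)" unfolding S1_def S2_def by auto
  have "V.rank M \<le> card (S1 \<union> S2)" by (rule V.rank_le_card_span[OF Mc Wc fin cols])
  also have "\<dots> \<le> card S1 + card S2" by (rule card_Un_le)
  also have "card S1 \<le> d" unfolding S1_def by (metis card_image_le card_lessThan finite_lessThan)
  also have "card S2 \<le> C - (K + 2 - L)" unfolding S2_def by (metis card_image_le card_atLeastLessThan finite_atLeastLessThan)
  also have "d + (C - (K + 2 - L)) < n + L" unfolding C_def K_def N_def using TN dN by linarith
  finally have rk: "V.rank M < n + L" by simp
  show ?thesis
  proof (intro exI conjI allI impI)
    show "x t \<in> carrier_vec n" for t by (rule xc)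
    show "x (t + 1) = A *\<^sub>v x t + u t \<cdot>\<^sub>v B" for t unfolding x_def by simp
    show "vec_space.rank (L + n) (hankel_scalar L T u @\<^sub>r hankel n 1 (T - L + 1) x) < n + L"
      using rk unfolding M_def .
  qed
qed


theorem proposition3:
  fixes n T L :: nat and u :: "nat \<Rightarrow> real" and \<eta> :: "real vec"
  assumes "1 \<le> L" and "L \<le> T" and "n + L \<le> T"
    and "\<eta> \<in> carrier_vec (n + L)" and "\<eta> \<noteq> 0\<^sub>v (n + L)"
    and "transpose_mat (hankel_scalar (n + L) T u) *\<^sub>v \<eta> = 0\<^sub>v (T - (n + L) + 1)"
  shows "\<forall>A B. A \<in> carrier_mat n n \<longrightarrow> B \<in> carrier_vec n \<longrightarrow> spec A \<inter> Lambda \<eta> = {} \<longrightarrow>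
    (\<exists>x :: nat \<Rightarrow> real vec.
       (\<forall>t \<le> T - L. x t \<in> carrier_vec n) \<and>
       (\<forall>t < T - L. x (t + 1) = A *\<^sub>v x t + u t \<cdot>\<^sub>v B) \<and>
       vec_space.rank (L + n) (hankel_scalar L T u @\<^sub>r hankel n 1 (T - L + 1) x) < n + L)"
proof (intro allI impI)
  fix A :: "real mat" and B :: "real vec" assume A: "A \<in> carrier_mat n n" and B: "B \<in> carrier_vec n" and sp: "spec A \<inter> Lambda \<eta> = {}"
  define N where "N = n + L"
  define e where "e i = \<eta> $ i" for i
  have etac: "\<eta> \<in> carrier_vec N" using assms(4) N_def by simp
  obtain j where j: "j < N" "e j \<noteq> 0"
    using assms(5) etac unfolding e_def N_def by (metis carrier_vecD eq_vecI index_zero_vec(1) index_zero_vec(2))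
  define I where "I = {i. i < N \<and> e i \<noteq> 0}"
  have fI: "finite I" unfolding I_def by auto
  have jI: "j \<in> I" using j unfolding I_def by auto
  define d where "d = Max I"
  have dI: "d \<in> I" unfolding d_def using fI jI Max_in by blast
  then have dN: "d < n + L" and ed: "e d \<noteq> 0" unfolding I_def N_def by auto
  have ez: "e i = 0" if "d < i" "i < n + L" for i
  proof (rule ccontr)
    assume "e i \<noteq> 0"
    then have "i \<in> I" using that unfolding I_def N_def by auto
    then have "i \<le> d" unfolding d_def using fI by simp
    then show False using that by simp
  qed
  have hyp: "(\<Sum>i<n+L. e i * u (t+i)) = 0" if t: "t \<le> T - (n+L)" for t
  proof -
    have Hc: "hankel_scalar (n + L) T u \<in> carrier_mat (n+L) (T - (n+L) + 1)"
      by (simp add: hankel_scalar_def)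
    have tt: "t < T - (n + L) + 1" using t by simp
    have "0 = (transpose_mat (hankel_scalar (n + L) T u) *\<^sub>v \<eta>) $ t" using assms(6) tt by simp
    also have "\<dots> = (\<Sum>i<n+L. hankel_scalar (n + L) T u $$ (i,t) * \<eta> $ i)"
      using Hc tt assms(4) by (simp add: scalar_prod_def atLeast0LessThan)
    also have "\<dots> = (\<Sum>i<n+L. e i * u (t+i))"
      using tt by (intro sum.cong) (auto simp: hankel_scalar_def e_def add.commute)
    finally show ?thesis by simp
  qed
  have detP: "det (mat n n (\<lambda>(k,l). \<Sum>i<n+L. e i * (A ^\<^sub>m i) $$ (k,l))) \<noteq> 0"
  proof (rule det_poly_nonzero[OF A])
    show "\<exists>i<n+L. e i \<noteq> 0" using j N_def by auto
    fix \<mu> assume "eigenvalue (map_mat complex_of_real A) \<mu>"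
    then have "\<mu> \<in> spec A" by (simp add: spec_def)
    then have "\<mu> \<notin> Lambda \<eta>" using sp by auto
    then show "(\<Sum>i<n+L. \<mu> ^ i * complex_of_real (e i)) \<noteq> 0"
      using assms(4) by (simp add: Lambda_def e_def)
  qed
  show "\<exists>x :: nat \<Rightarrow> real vec.
       (\<forall>t \<le> T - L. x t \<in> carrier_vec n) \<and>
       (\<forall>t < T - L. x (t + 1) = A *\<^sub>v x t + u t \<cdot>\<^sub>v B) \<and>
       vec_space.rank (L + n) (hankel_scalar L T u @\<^sub>r hankel n 1 (T - L + 1) x) < n + L"
    by (rule core[OF A B assms(3) dN ed ez hyp detP])
qed

end
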